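(* Let $\alpha$ be irrational with convergents $p_k/q_k$. For integers $k \ge 1$ and $0 \le M <q_k$ define \[ B_{k,M}(x)= \log \frac{P_M (\alpha, (-1)^k x/q_k)}{P_M (p_k/q_k, (-1)^k x/q_k)} - \sum_{n=1}^M \sin (\pi n \| q_k \alpha \| /q_k ) \cot \left( \pi \frac{n (-1)^k p_k+x}{q_k} \right) . \] Then \[ \log P_{q_k}(\alpha, (-1)^k x/q_k) = \log \left( |2 \sin (\pi (\| q_k \alpha \| + x/q_k))| \frac{|\sin (\pi x)|}{|\sin (\pi x/q_k)|} \right) + V_k (x) + B_{k,q_k-1}(x) , \] with the convention $|\sin (\pi x)| / |\sin (\pi x /q_k)| =q_k$ when $x/q_k \in \mathbb{Z}$.
   Context: $P_N(\beta,x)=\prod_{n=1}^N|2\sin(\pi(n\beta+x))|$. $p_k/q_k=[a_0;a_1,\dots,a_k]$ are the convergents of $\alpha=[a_0;a_1,\dots]$; $\|y\|$ is distance to nearest integer. $V_k(x)=\sum_{n=1}^{q_k-1} \sin (\pi n \| q_k \alpha \| /q_k) \cot \left( \pi \frac{n(-1)^k p_k+x}{q_k} \right)$. *)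

theory Defs
  imports "HOL-Analysis.Analysis"
begin

definition Pprod :: "nat \<Rightarrow> real \<Rightarrow> real \<Rightarrow> real" where
  "Pprod N \<beta> x = (\<Prod>n\<in>{1..N}. \<bar>2 * sin (pi * (real n * \<beta> + x))\<bar>)"

definition dist_int :: "real \<Rightarrow> real" where
  "dist_int y = min (frac y) (1 - frac y)"

fun cf_rem :: "real \<Rightarrow> nat \<Rightarrow> real" where
  "cf_rem \<alpha> 0 = \<alpha>"
| "cf_rem \<alpha> (Suc k) = 1 / frac (cf_rem \<alpha> k)"

definition cf_a :: "real \<Rightarrow> nat \<Rightarrow> int" where
  "cf_a \<alpha> k = \<lfloor>cf_rem \<alpha> k\<rfloor>"

text \<open>Convergents p_k/q_k: p_{-1}=1, q_{-1}=0, p_0=a_0, q_0=1,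
  p_k = a_k p_{k-1} + p_{k-2}, q_k = a_k q_{k-1} + q_{k-2}.\<close>
fun conv_p :: "real \<Rightarrow> nat \<Rightarrow> int" where
  "conv_p \<alpha> 0 = cf_a \<alpha> 0"
| "conv_p \<alpha> (Suc 0) = cf_a \<alpha> 1 * cf_a \<alpha> 0 + 1"
| "conv_p \<alpha> (Suc (Suc k)) = cf_a \<alpha> (Suc (Suc k)) * conv_p \<alpha> (Suc k) + conv_p \<alpha> k"

fun conv_q :: "real \<Rightarrow> nat \<Rightarrow> int" where
  "conv_q \<alpha> 0 = 1"
| "conv_q \<alpha> (Suc 0) = cf_a \<alpha> 1"
| "conv_q \<alpha> (Suc (Suc k)) = cf_a \<alpha> (Suc (Suc k)) * conv_q \<alpha> (Suc k) + conv_q \<alpha> k"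

definition Vk :: "real \<Rightarrow> nat \<Rightarrow> real \<Rightarrow> real" where
  "Vk \<alpha> k x = (let p = conv_p \<alpha> k; q = conv_q \<alpha> k in
     (\<Sum>n\<in>{1..<nat q}. sin (pi * real n * dist_int (real_of_int q * \<alpha>) / real_of_int q)
        * cot (pi * (real n * (-1)^k * real_of_int p + x) / real_of_int q)))"

definition Bkm :: "real \<Rightarrow> nat \<Rightarrow> nat \<Rightarrow> real \<Rightarrow> real" where
  "Bkm \<alpha> k M x = (let p = conv_p \<alpha> k; q = conv_q \<alpha> k in
     ln (Pprod M \<alpha> ((-1)^k * x / real_of_int q)
         / Pprod M (real_of_int p / real_of_int q) ((-1)^k * x / real_of_int q))
     - (\<Sum>n\<in>{1..M}. sin (pi * real n * dist_int (real_of_int q * \<alpha>) / real_of_int q)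
        * cot (pi * (real n * (-1)^k * real_of_int p + x) / real_of_int q)))"

definition sin_ratio :: "real \<Rightarrow> real \<Rightarrow> real" where
  "sin_ratio q x = (if x / q \<in> \<int> then q else \<bar>sin (pi * x)\<bar> / \<bar>sin (pi * x / q)\<bar>)"

end

theory Submission
  imports Defs "HOL-Computational_Algebra.Polynomial"
begin


definition om :: "nat \<Rightarrow> nat \<Rightarrow> complex" where
  "om n j = cis (2 * pi * real j / real n)"

lemma om_inj: "n > 0 \<Longrightarrow> inj_on (om n) {..<n}"
  using Complex.bij_betw_roots_unity[of n] unfolding om_def bij_betw_def by blast

lemma om_pow: "n > 0 \<Longrightarrow> om n j ^ n = 1"
proof -
  assume n: "n > 0"
  have "om n j ^ n = cis (2 * pi * real j)"
    unfolding om_def Complex.DeMoivre using n by (simp add: field_simps)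
  also have "\<dots> = 1" by (metis cis_multiple_2pi Ints_of_nat mult.assoc)
  finally show ?thesis .
qed

lemma om_ne1: "n > 0 \<Longrightarrow> 1 \<le> j \<Longrightarrow> j < n \<Longrightarrow> om n j \<noteq> 1"
proof
  assume n: "n > 0" and j: "1 \<le> j" "j < n" and e: "om n j = 1"
  have "om n 0 = 1" by (simp add: om_def)
  with e have "om n j = om n 0" by simp
  with om_inj[OF n] j n have "j = 0" by (auto dest: inj_onD)
  with j show False by simp
qed

lemma prod_roots:
  assumes n: "n > 0"
  shows "(\<Prod>j\<in>{1..<n}. z - om n j) = (\<Sum>i<n. z ^ i)"
proof -
  define P1 where "P1 = (\<Prod>j\<in>{1..<n}. [:- om n j, 1:])"
  define P2 where "P2 = (\<Sum>i<n. monom (1::complex) i)"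
  have p1: "poly P1 z = (\<Prod>j\<in>{1..<n}. z - om n j)" for z
    unfolding P1_def by (simp add: poly_prod)
  have p2: "poly P2 z = (\<Sum>i<n. z ^ i)" for z
    unfolding P2_def by (simp add: poly_sum poly_monom)
  have dP1: "degree P1 = n - 1"
    unfolding P1_def by (subst degree_prod_eq_sum_degree) auto
  have lP1: "lead_coeff P1 = 1"
    unfolding P1_def lead_coeff_prod by simp
  have cP2: "coeff P2 i = (if i < n then 1 else 0)" for i
    unfolding P2_def coeff_sum by (simp add: coeff_monom)
  have dP2: "degree P2 \<le> n - 1"
    by (rule degree_le) (auto simp: cP2)
  have "P1 = P2"
  proof (rule poly_eqI_degree_lead_coeff[where n = "n - 1" and A = "om n ` {1..<n}"])
    show "coeff P1 (n - 1) = coeff P2 (n - 1)" using lP1 dP1 cP2 n by simp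
    have "inj_on (om n) {1..<n}" using om_inj[OF n] by (rule inj_on_subset) auto
    then show "n - 1 \<le> card (om n ` {1..<n})" by (simp add: card_image)
    show "degree P1 \<le> n - 1" using dP1 by simp
    show "degree P2 \<le> n - 1" by fact
    fix w assume "w \<in> om n ` {1..<n}"
    then obtain j where j: "1 \<le> j" "j < n" "w = om n j" by auto
    have "poly P1 w = 0" unfolding p1 using j by (intro prod_zero) auto
    moreover have "poly P2 w = 0" unfolding p2 using j om_ne1[OF n] om_pow[OF n]
      by (simp add: geometric_sum)
    ultimately show "poly P1 w = poly P2 w" by simp
  qed
  then show ?thesis using p1 p2 by metis
qed

lemma prod_roots2:
  assumes n: "n > 0" and w: "w \<noteq> 0"
  shows "(\<Prod>j\<in>{1..<n}. 1 - w * om n j) = (\<Sum>i<n. w ^ i)"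
proof -
  have "(\<Prod>j\<in>{1..<n}. 1 - w * om n j) = (\<Prod>j\<in>{1..<n}. w * (inverse w - om n j))"
    using w by (intro prod.cong) (auto simp: field_simps)
  also have "\<dots> = w ^ (n - 1) * (\<Sum>i<n. inverse w ^ i)"
    by (simp add: prod.distrib prod_roots[OF n] del: One_nat_def)
  also have "\<dots> = (\<Sum>i<n. w ^ (n - Suc i))"
    unfolding sum_distrib_left
  proof (intro sum.cong refl)
    fix i assume "i \<in> {..<n}"
    then have "n - 1 = (n - Suc i) + i" by auto
    then show "w ^ (n - 1) * inverse w ^ i = w ^ (n - Suc i)"
      using w by (simp add: power_add power_inverse field_simps)
  qed
  also have "\<dots> = (\<Sum>i<n. w ^ i)" by (rule sum.nat_diff_reindex)
  finally show ?thesis .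
qed



lemma norm_1_cis: "cmod (1 - cis t) = \<bar>2 * sin (t / 2)\<bar>"
proof -
  have "(cmod (1 - cis t))\<^sup>2 = (1 - cos t)\<^sup>2 + (sin t)\<^sup>2"
    by (simp add: cmod_power2)
  also have "\<dots> = 2 - 2 * cos t" using sin_cos_squared_add[of t]
    by (simp add: power2_eq_square algebra_simps)
  also have "cos t = 1 - 2 * sin (t/2) ^ 2" using cos_double_sin[of "t/2"] by simp
  finally have "(cmod (1 - cis t))\<^sup>2 = (\<bar>2 * sin (t / 2)\<bar>)\<^sup>2"
    by (simp add: power2_eq_square)
  then show ?thesis by (metis abs_ge_zero norm_ge_zero power2_eq_iff_nonneg)
qed

lemma abs_sin_shift: fixes a b :: real shows "sin a = 0 \<Longrightarrow> \<bar>sin (a + b)\<bar> = \<bar>sin b\<bar>"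
proof -
  assume s: "sin a = 0"
  then have "(cos a)\<^sup>2 = 1" using sin_cos_squared_add[of a] by simp
  then have "\<bar>cos a\<bar> = 1" by (auto simp: power2_eq_1_iff)
  then show ?thesis using s by (simp add: sin_add abs_mult)
qed

lemma abs_sin_int: fixes m b :: real shows "m \<in> \<int> \<Longrightarrow> \<bar>sin (pi * (m + b))\<bar> = \<bar>sin (pi * b)\<bar>"
proof -
  assume "m \<in> \<int>"
  then have "sin (m * pi) = 0" by (simp add: sin_times_pi_eq_0)
  then have "\<bar>sin (m * pi + pi * b)\<bar> = \<bar>sin (pi * b)\<bar>" by (rule abs_sin_shift)
  then show ?thesis by (simp add: algebra_simps)
qed

lemma cis_eq_1: "cis (2 * pi * y) = 1 \<Longrightarrow> y \<in> \<int>"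
proof -
  assume "cis (2 * pi * y) = 1"
  then have "cos (2 * pi * y) = 1" by (metis cis.sel(1) one_complex.sel(1))
  then obtain m :: int where "2 * pi * y = m * 2 * pi" by (auto simp: cos_one_2pi_int)
  then have "y = m" by simp
  then show ?thesis by simp
qed

lemma reindex_coprime:
  fixes q :: nat and p :: int and g :: "real \<Rightarrow> real"
  assumes q: "q > 0" and cop: "coprime p (int q)"
  and per: "\<And>t m. m \<in> \<int> \<Longrightarrow> g (m + t) = g t"
  shows "(\<Prod>n\<in>{1..<q}. g (real n * (real_of_int p / real q)))
       = (\<Prod>j\<in>{1..<q}. g (real j / real q))"
proof -
  define f where "f n = nat ((int n * p) mod int q)" for n
  have fr: "real n * (real_of_int p / real q) = real_of_int ((int n * p) div int q) + real (f n) / real q" for n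
  proof -
    have "int n * p = int q * ((int n * p) div int q) + (int n * p) mod int q" by simp
    then have "real n * real_of_int p = real q * real_of_int ((int n * p) div int q) + real_of_int ((int n * p) mod int q)"
      by (metis of_int_add of_int_mult of_int_of_nat_eq)
    moreover have "real_of_int ((int n * p) mod int q) = real (f n)" unfolding f_def using q by simp
    ultimately show ?thesis using q by (simp add: field_simps)
  qed
  have inj: "inj_on f {1..<q}"
  proof
    fix a b assume a: "a \<in> {1..<q}" and b: "b \<in> {1..<q}" and e: "f a = f b"
    moreover have "(int a * p) mod int q \<ge> 0" "(int b * p) mod int q \<ge> 0" using q by auto
    ultimately have "(int a * p) mod int q = (int b * p) mod int q" using e unfolding f_def by (metis eq_nat_nat_iff)
    then have "int q dvd (int a - int b) * p" by (simp add: mod_eq_dvd_iff algebra_simps)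
    then have "int q dvd (int a - int b)" using cop
      by (metis coprime_commute coprime_dvd_mult_left_iff)
    then obtain c where c: "int a - int b = int q * c" by (auto elim: dvdE)
    have "c = 0"
    proof (rule ccontr)
      assume "c \<noteq> 0"
      then have "\<bar>c\<bar> \<ge> 1" by linarith
      then have "int q * \<bar>c\<bar> \<ge> int q * 1" by (intro mult_left_mono) auto
      moreover have "\<bar>int a - int b\<bar> < int q" using a b by auto
      ultimately show False using c by (simp add: abs_mult)
    qed
    with c show "a = b" by simp
  qed
  have sub: "f ` {1..<q} \<subseteq> {1..<q}"
  proof
    fix y assume "y \<in> f ` {1..<q}"
    then obtain n where n: "n \<in> {1..<q}" "y = f n" by auto
    have "(int n * p) mod int q \<noteq> 0"
    proof
      assume "(int n * p) mod int q = 0"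
      then have "int q dvd int n * p" by auto
      then have "int q dvd int n" using cop by (metis coprime_commute coprime_dvd_mult_left_iff)
      with n show False by (auto dest: zdvd_imp_le)
    qed
    moreover have "(int n * p) mod int q < int q" "(int n * p) mod int q \<ge> 0" using q by auto
    ultimately have "1 \<le> nat ((int n * p) mod int q)" "nat ((int n * p) mod int q) < q" by linarith+
    then show "y \<in> {1..<q}" using n unfolding f_def by auto
  qed
  have img: "f ` {1..<q} = {1..<q}" by (rule endo_inj_surj[OF _ sub inj]) simp
  have "(\<Prod>n\<in>{1..<q}. g (real n * (real_of_int p / real q))) = (\<Prod>n\<in>{1..<q}. g (real (f n) / real q))"
    by (intro prod.cong refl) (subst fr, rule per, simp)
  also have "\<dots> = (\<Prod>j\<in>f ` {1..<q}. g (real j / real q))"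
    by (rule prod.reindex[OF inj, symmetric, unfolded comp_def])
  finally show ?thesis unfolding img .
qed



lemma Dval:
  fixes q :: nat and p :: int and y :: real
  assumes q: "q > 0" and cop: "coprime p (int q)"
  shows "(\<Prod>n\<in>{1..<q}. \<bar>2 * sin (pi * (real n * (real_of_int p / real q) + y))\<bar>)
       = (if y \<in> \<int> then real q else \<bar>sin (pi * (real q * y))\<bar> / \<bar>sin (pi * y)\<bar>)"
proof -
  define w where "w = cis (2 * pi * y)"
  have w0: "w \<noteq> 0" unfolding w_def by (metis cis_neq_zero)
  have "(\<Prod>n\<in>{1..<q}. \<bar>2 * sin (pi * (real n * (real_of_int p / real q) + y))\<bar>)
      = (\<Prod>j\<in>{1..<q}. \<bar>2 * sin (pi * (real j / real q + y))\<bar>)"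
  proof (rule reindex_coprime[OF q cop, where g = "\<lambda>t. \<bar>2 * sin (pi * (t + y))\<bar>"])
    fix t m :: real assume "m \<in> \<int>"
    then have "\<bar>sin (pi * (m + (t + y)))\<bar> = \<bar>sin (pi * (t + y))\<bar>" by (rule abs_sin_int)
    then show "\<bar>2 * sin (pi * (m + t + y))\<bar> = \<bar>2 * sin (pi * (t + y))\<bar>"
      by (simp add: abs_mult add.assoc)
  qed
  also have "\<dots> = (\<Prod>j\<in>{1..<q}. cmod (1 - w * om q j))"
  proof (intro prod.cong refl)
    fix j assume "j \<in> {1..<q}"
    have "w * om q j = cis (2 * pi * (real j / real q + y))"
      unfolding w_def om_def cis_mult by (simp add: algebra_simps)
    then show "\<bar>2 * sin (pi * (real j / real q + y))\<bar> = cmod (1 - w * om q j)"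
      by (simp add: norm_1_cis)
  qed
  also have "\<dots> = cmod (\<Sum>i<q. w ^ i)"
    unfolding prod_norm prod_roots2[OF q w0] ..
  also have "\<dots> = (if y \<in> \<int> then real q else \<bar>sin (pi * (real q * y))\<bar> / \<bar>sin (pi * y)\<bar>)"
  proof (cases "y \<in> \<int>")
    case True
    then have "w = 1" unfolding w_def by simp
    then show ?thesis using True by simp
  next
    case False
    then have w1: "w \<noteq> 1" unfolding w_def using cis_eq_1 by blast
    have wq: "w ^ q = cis (2 * pi * (real q * y))"
      unfolding w_def Complex.DeMoivre by (simp add: algebra_simps)
    have "cmod (\<Sum>i<q. w ^ i) = cmod ((w ^ q - 1) / (w - 1))" by (simp add: geometric_sum[OF w1])
    also have "\<dots> = cmod (1 - w ^ q) / cmod (1 - w)"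
      by (simp add: norm_divide norm_minus_commute)
    also have "\<dots> = \<bar>2 * sin (pi * (real q * y))\<bar> / \<bar>2 * sin (pi * y)\<bar>"
      unfolding wq unfolding w_def norm_1_cis by simp
    also have "\<dots> = \<bar>sin (pi * (real q * y))\<bar> / \<bar>sin (pi * y)\<bar>" by (simp add: abs_mult)
    finally show ?thesis using False by simp
  qed
  finally show ?thesis .
qed



fun pp :: "real \<Rightarrow> nat \<Rightarrow> int" where
  "pp \<alpha> 0 = 1" | "pp \<alpha> (Suc k) = conv_p \<alpha> k"
fun qq :: "real \<Rightarrow> nat \<Rightarrow> int" where
  "qq \<alpha> 0 = 0" | "qq \<alpha> (Suc k) = conv_q \<alpha> k"

lemma p_rec: "conv_p \<alpha> (Suc k) = cf_a \<alpha> (Suc k) * conv_p \<alpha> k + pp \<alpha> k"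
  by (cases k) auto
lemma q_rec: "conv_q \<alpha> (Suc k) = cf_a \<alpha> (Suc k) * conv_q \<alpha> k + qq \<alpha> k"
  by (cases k) auto

lemma r_irr: "\<alpha> \<notin> \<rat> \<Longrightarrow> cf_rem \<alpha> k \<notin> \<rat>"
proof (induction k)
  case 0 then show ?case by simp
next
  case (Suc k)
  show ?case
  proof
    assume "cf_rem \<alpha> (Suc k) \<in> \<rat>"
    then have "1 / cf_rem \<alpha> (Suc k) \<in> \<rat>" by (intro Rats_divide) auto
    moreover have "1 / cf_rem \<alpha> (Suc k) = frac (cf_rem \<alpha> k)" by simp
    ultimately have "frac (cf_rem \<alpha> k) \<in> \<rat>" by simp
    then have "frac (cf_rem \<alpha> k) + of_int \<lfloor>cf_rem \<alpha> k\<rfloor> \<in> \<rat>" by (intro Rats_add) auto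
    then have "cf_rem \<alpha> k \<in> \<rat>" by (simp add: frac_def)
    with Suc show False by simp
  qed
qed

lemma frac_r_pos: "\<alpha> \<notin> \<rat> \<Longrightarrow> frac (cf_rem \<alpha> k) > 0"
proof -
  assume a: "\<alpha> \<notin> \<rat>"
  have "frac (cf_rem \<alpha> k) \<noteq> 0"
  proof
    assume "frac (cf_rem \<alpha> k) = 0"
    then have "cf_rem \<alpha> k \<in> \<int>" by (simp add: frac_eq_0_iff)
    then have "cf_rem \<alpha> k \<in> \<rat>" using Ints_subset_Rats by blast
    with r_irr[OF a] show False by simp
  qed
  then show ?thesis using frac_ge_0[of "cf_rem \<alpha> k"] by linarith
qed

lemma r_gt1: "\<alpha> \<notin> \<rat> \<Longrightarrow> cf_rem \<alpha> (Suc k) > 1"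
  using frac_r_pos[of \<alpha> k] frac_lt_1[of "cf_rem \<alpha> k"] by (simp add: field_simps)

lemma a_pos: "\<alpha> \<notin> \<rat> \<Longrightarrow> cf_a \<alpha> (Suc k) \<ge> 1"
  using r_gt1[of \<alpha> k] unfolding cf_a_def by (simp add: le_floor_iff)

lemma r_split: "\<alpha> \<notin> \<rat> \<Longrightarrow> cf_rem \<alpha> k = cf_a \<alpha> k + 1 / cf_rem \<alpha> (Suc k)"
  using frac_r_pos[of \<alpha> k] unfolding cf_a_def by (simp add: frac_def)

lemma qq_pos: "\<alpha> \<notin> \<rat> \<Longrightarrow> qq \<alpha> k \<ge> 0 \<and> qq \<alpha> (Suc k) \<ge> 1"
proof (induction k)
  case 0 then show ?case by simp
next
  case (Suc k)
  have "qq \<alpha> (Suc (Suc k)) = cf_a \<alpha> (Suc k) * qq \<alpha> (Suc k) + qq \<alpha> k" by (simp add: q_rec)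
  moreover have "cf_a \<alpha> (Suc k) * qq \<alpha> (Suc k) \<ge> 1 * 1"
    using a_pos[OF Suc.prems, of k] Suc by (intro mult_mono) auto
  ultimately show ?case using Suc by simp
qed

lemma det: "pp \<alpha> (Suc k) * qq \<alpha> k - pp \<alpha> k * qq \<alpha> (Suc k) = (-1) ^ Suc k"
proof (induction k)
  case 0 then show ?case by simp
next
  case (Suc k)
  have "pp \<alpha> (Suc (Suc k)) = cf_a \<alpha> (Suc k) * pp \<alpha> (Suc k) + pp \<alpha> k" by (simp add: p_rec)
  moreover have "qq \<alpha> (Suc (Suc k)) = cf_a \<alpha> (Suc k) * qq \<alpha> (Suc k) + qq \<alpha> k" by (simp add: q_rec)
  ultimately show ?case using Suc by (simp add: algebra_simps)
qed

lemma repr: "\<alpha> \<notin> \<rat> \<Longrightarrow> \<alpha> * (qq \<alpha> (Suc k) * cf_rem \<alpha> (Suc k) + qq \<alpha> k)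
   = pp \<alpha> (Suc k) * cf_rem \<alpha> (Suc k) + pp \<alpha> k"
proof (induction k)
  case 0
  have "\<alpha> = cf_a \<alpha> 0 + frac \<alpha>" by (simp add: cf_a_def frac_def)
  moreover have "frac \<alpha> > 0" using frac_r_pos[OF 0, of 0] by simp
  ultimately show ?case by (simp add: field_simps)
next
  case (Suc k)
  define R where "R = cf_rem \<alpha> (Suc (Suc k))"
  define s where "s = cf_rem \<alpha> (Suc k)"
  define a where "a = real_of_int (cf_a \<alpha> (Suc k))"
  have R: "R > 1" unfolding R_def by (rule r_gt1[OF Suc.prems])
  have s: "s = a + 1 / R" unfolding s_def a_def R_def by (rule r_split[OF Suc.prems])
  have IH: "\<alpha> * (qq \<alpha> (Suc k) * s + qq \<alpha> k) = pp \<alpha> (Suc k) * s + pp \<alpha> k"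
    using Suc unfolding s_def by simp
  have P: "real_of_int (pp \<alpha> (Suc (Suc k))) = a * pp \<alpha> (Suc k) + pp \<alpha> k"
    unfolding a_def by (simp add: p_rec)
  have Q: "real_of_int (qq \<alpha> (Suc (Suc k))) = a * qq \<alpha> (Suc k) + qq \<alpha> k"
    unfolding a_def by (simp add: q_rec)
  have e1: "qq \<alpha> (Suc (Suc k)) * R + qq \<alpha> (Suc k) = R * (qq \<alpha> (Suc k) * s + qq \<alpha> k)"
    unfolding Q s using R by (simp add: field_simps)
  have e2: "pp \<alpha> (Suc (Suc k)) * R + pp \<alpha> (Suc k) = R * (pp \<alpha> (Suc k) * s + pp \<alpha> k)"
    unfolding P s using R by (simp add: field_simps)
  show ?case unfolding R_def[symmetric] e1 e2 using IH by (metis mult.left_commute)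
qed

lemma dist_int_near: "\<bar>e\<bar> < 1/2 \<Longrightarrow> dist_int (of_int m + e) = \<bar>e\<bar>"
proof -
  assume e: "\<bar>e\<bar> < 1/2"
  show ?thesis
  proof (cases "e \<ge> 0")
    case True
    then have "frac e = e" using e by (simp add: frac_eq)
    then show ?thesis using True e unfolding dist_int_def by simp
  next
    case False
    then have "\<lfloor>e\<rfloor> = -1" using e by (simp add: floor_eq_iff)
    then have "frac e = e + 1" by (simp add: frac_def)
    then show ?thesis using False e unfolding dist_int_def by simp
  qed
qed

lemma cf_main:
  assumes irr: "\<alpha> \<notin> \<rat>" and k: "k \<ge> 1"
  shows "conv_q \<alpha> k \<ge> 1" "coprime (conv_p \<alpha> k) (conv_q \<alpha> k)"
    "real_of_int (conv_q \<alpha> k) * \<alpha> - conv_p \<alpha> k = (-1) ^ k * dist_int (real_of_int (conv_q \<alpha> k) * \<alpha>)"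
proof -
  show "conv_q \<alpha> k \<ge> 1" using qq_pos[OF irr, of k] by simp
  have d: "pp \<alpha> (Suc k) * qq \<alpha> k - pp \<alpha> k * qq \<alpha> (Suc k) = (-1) ^ Suc k" by (rule det)
  show "coprime (conv_p \<alpha> k) (conv_q \<alpha> k)"
  proof (rule coprimeI)
    fix c assume "c dvd conv_p \<alpha> k" "c dvd conv_q \<alpha> k"
    then have "c dvd pp \<alpha> (Suc k) * qq \<alpha> k - pp \<alpha> k * qq \<alpha> (Suc k)" by simp
    then have "c dvd (-1) ^ Suc k" using d by simp
    moreover have "is_unit ((-1::int) ^ Suc k)" by simp
    ultimately show "is_unit c" by (rule dvd_unit_imp_unit)
  qed
  define Q1 where "Q1 = real_of_int (qq \<alpha> (Suc k))"
  define Q0 where "Q0 = real_of_int (qq \<alpha> k)"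
  define P1 where "P1 = real_of_int (pp \<alpha> (Suc k))"
  define P0 where "P0 = real_of_int (pp \<alpha> k)"
  define s where "s = cf_rem \<alpha> (Suc k)"
  define Den where "Den = Q1 * s + Q0"
  have s1: "s > 1" unfolding s_def by (rule r_gt1[OF irr])
  have Q1: "Q1 \<ge> 1" unfolding Q1_def using qq_pos[OF irr, of k] by simp
  have Q0: "Q0 \<ge> 1" unfolding Q0_def using qq_pos[OF irr, of "k - 1"] k by simp
  have "Q1 * s \<ge> 1 * s" using Q1 s1 by (intro mult_right_mono) auto
  then have Den2: "Den > 2" unfolding Den_def using s1 Q0 by linarith
  have r: "\<alpha> * Den = P1 * s + P0" unfolding Den_def Q1_def Q0_def P1_def P0_def s_def
    using repr[OF irr, of k] by simp
  have dr: "P1 * Q0 - P0 * Q1 = (-1) ^ Suc k" unfolding P1_def P0_def Q1_def Q0_def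
    using arg_cong[OF d, of real_of_int] by simp
  have "(Q1 * \<alpha> - P1) * Den = Q1 * (\<alpha> * Den) - P1 * Den" by (simp add: algebra_simps)
  also have "\<dots> = Q1 * (P1 * s + P0) - P1 * Den" using r by simp
  also have "\<dots> = (-1) ^ k" unfolding Den_def using dr by (simp add: algebra_simps)
  finally have err: "Q1 * \<alpha> - P1 = (-1) ^ k / Den" using Den2 by (simp add: field_simps)
  have "\<bar>(-1::real) ^ k / Den\<bar> = 1 / Den" using Den2 by (simp add: abs_div)
  then have ab: "\<bar>(-1::real) ^ k / Den\<bar> < 1/2" using Den2 by (simp add: field_simps)
  have "Q1 * \<alpha> = of_int (pp \<alpha> (Suc k)) + (-1) ^ k / Den" using err unfolding P1_def by simp
  then have "dist_int (Q1 * \<alpha>) = 1 / Den" using dist_int_near[OF ab] \<open>\<bar>(-1::real) ^ k / Den\<bar> = 1 / Den\<close> by simp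
  then show "real_of_int (conv_q \<alpha> k) * \<alpha> - conv_p \<alpha> k = (-1) ^ k * dist_int (real_of_int (conv_q \<alpha> k) * \<alpha>)"
    using err unfolding Q1_def P1_def by simp
qed



lemma abs_sin_sign: "\<bar>sin (pi * ((-1::real) ^ k * t))\<bar> = \<bar>sin (pi * t)\<bar>"
  by (cases "even k") auto

theorem corollary1:
  fixes \<alpha> x :: real and k :: nat
  assumes irr: "\<alpha> \<notin> \<rat>"
    and k: "k \<ge> 1"
    and def1: "Pprod (nat (conv_q \<alpha> k)) \<alpha> ((-1)^k * x / real_of_int (conv_q \<alpha> k)) \<noteq> 0"
    and def2: "Pprod (nat (conv_q \<alpha> k) - 1) (real_of_int (conv_p \<alpha> k) / real_of_int (conv_q \<alpha> k))
                 ((-1)^k * x / real_of_int (conv_q \<alpha> k)) \<noteq> 0"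
  shows "ln (Pprod (nat (conv_q \<alpha> k)) \<alpha> ((-1)^k * x / real_of_int (conv_q \<alpha> k)))
       = ln (\<bar>2 * sin (pi * (dist_int (real_of_int (conv_q \<alpha> k) * \<alpha>) + x / real_of_int (conv_q \<alpha> k)))\<bar>
             * sin_ratio (real_of_int (conv_q \<alpha> k)) x)
         + Vk \<alpha> k x + Bkm \<alpha> k (nat (conv_q \<alpha> k) - 1) x"
proof -
  define Q where "Q = conv_q \<alpha> k"
  define p where "p = conv_p \<alpha> k"
  define N where "N = nat Q"
  define y where "y = (-1)^k * x / real_of_int Q"
  define \<delta> where "\<delta> = dist_int (real_of_int Q * \<alpha>)"
  have Q1: "Q \<ge> 1" unfolding Q_def by (rule cf_main(1)[OF irr k])
  have cop: "coprime p Q" unfolding Q_def p_def by (rule cf_main(2)[OF irr k])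
  have err: "real_of_int Q * \<alpha> - p = (-1) ^ k * \<delta>" unfolding Q_def p_def \<delta>_def by (rule cf_main(3)[OF irr k])
  have N0: "N > 0" and NQ: "real N = real_of_int Q" and NQi: "int N = Q" using Q1 unfolding N_def by auto
  define B where "B = Pprod (N - 1) \<alpha> y"
  define D where "D = Pprod (N - 1) (real_of_int p / real_of_int Q) y"
  define A where "A = \<bar>2 * sin (pi * (real N * \<alpha> + y))\<bar>"
  have PN: "Pprod N \<alpha> y = B * A"
  proof -
    have "N = Suc (N - 1)" using N0 by simp
    then have "Pprod N \<alpha> y = Pprod (Suc (N - 1)) \<alpha> y" by simp
    also have "\<dots> = B * \<bar>2 * sin (pi * (real (Suc (N - 1)) * \<alpha> + y))\<bar>"
      unfolding Pprod_def B_def by simp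
    also have "real (Suc (N - 1)) = real N" using N0 by simp
    finally show ?thesis unfolding A_def .
  qed
  have Aeq: "A = \<bar>2 * sin (pi * (\<delta> + x / real_of_int Q))\<bar>"
  proof -
    have "real N * \<alpha> + y = real_of_int p + (-1) ^ k * (\<delta> + x / real_of_int Q)"
      unfolding NQ y_def using err by (simp add: algebra_simps)
    then have "\<bar>sin (pi * (real N * \<alpha> + y))\<bar> = \<bar>sin (pi * ((-1) ^ k * (\<delta> + x / real_of_int Q)))\<bar>"
      by (simp add: abs_sin_int)
    then show ?thesis unfolding A_def abs_mult abs_sin_sign by simp
  qed
  have Deq: "D = sin_ratio (real_of_int Q) x"
  proof -
    have "D = (\<Prod>n\<in>{1..<N}. \<bar>2 * sin (pi * (real n * (real_of_int p / real N) + y))\<bar>)"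
      unfolding D_def Pprod_def NQ[symmetric] using N0
      by (intro prod.cong) auto
    also have "\<dots> = (if y \<in> \<int> then real N else \<bar>sin (pi * (real N * y))\<bar> / \<bar>sin (pi * y)\<bar>)"
      by (rule Dval[OF N0]) (simp add: NQi cop)
    also have "\<dots> = sin_ratio (real_of_int Q) x"
    proof -
      have yi: "y \<in> \<int> \<longleftrightarrow> x / real_of_int Q \<in> \<int>"
        unfolding y_def by (cases "even k") (auto simp: minus_in_Ints_iff)
      have s1: "\<bar>sin (pi * (real N * y))\<bar> = \<bar>sin (pi * x)\<bar>"
        unfolding y_def NQ using Q1 abs_sin_sign[of k x] by (simp add: field_simps)
      have s2: "\<bar>sin (pi * y)\<bar> = \<bar>sin (pi * x / real_of_int Q)\<bar>"
        unfolding y_def using abs_sin_sign[of k "x / real_of_int Q"] by (simp add: field_simps)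
      show ?thesis unfolding sin_ratio_def yi s1 s2 by (simp add: NQ)
    qed
    finally show ?thesis .
  qed
  have VB: "Vk \<alpha> k x + Bkm \<alpha> k (N - 1) x = ln (B / D)"
  proof -
    have "{1..<N} = {1..N - 1}" using N0 by auto
    then show ?thesis unfolding Vk_def Bkm_def Let_def B_def D_def y_def
      by (simp add: Q_def p_def N_def)
  qed
  have Bpos: "B > 0" and Apos: "A > 0"
  proof -
    have "B \<ge> 0" unfolding B_def Pprod_def by (intro prod_nonneg) auto
    moreover have "A \<ge> 0" unfolding A_def by simp
    moreover have "B * A \<noteq> 0" using def1 PN unfolding Q_def[symmetric] N_def[symmetric] y_def by simp
    ultimately show "B > 0" "A > 0" by (auto simp: less_le)
  qed
  have Dpos: "D > 0"
  proof -
    have "D \<ge> 0" unfolding D_def Pprod_def by (intro prod_nonneg) auto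
    moreover have "D \<noteq> 0" using def2 unfolding D_def Q_def p_def N_def y_def by simp
    ultimately show ?thesis by simp
  qed
  have "ln (Pprod N \<alpha> y) = ln (A * D) + ln (B / D)"
    unfolding PN using Apos Bpos Dpos by (simp add: ln_mult ln_div)
  then have "ln (Pprod N \<alpha> y) = ln (\<bar>2 * sin (pi * (\<delta> + x / real_of_int Q))\<bar> * sin_ratio (real_of_int Q) x)
      + (Vk \<alpha> k x + Bkm \<alpha> k (N - 1) x)"
    unfolding VB Deq Aeq .
  then show ?thesis
    by (simp add: Q_def p_def N_def y_def \<delta>_def add.assoc)
qed

end
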